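(* Let $(\Delta,\mathfrak o,m,q)$ be a quantized Brauer graph. Then there exist a finite abelian group $G$ and a Brauer weighting $W:\mathcal Z_\Delta\to G$ of $(\Delta,\mathfrak o,m,q)$ such that the graph $\Delta_W$ of the quantized Brauer covering graph $(\Delta_W,\mathfrak o_W,m_W,q_W)$ contains no loops.
   Context: Brauer graphs. A Brauer graph $(\Delta,\mathfrak o,m)$ is a finite connected graph $\Delta$ (loops and multiple edges allowed) with vertex set $\Delta_0$, edge set $\Delta_1$ and at least one edge, together with a multiplicity function $m:\Delta_0\to\mathbb Z_{\ge 1}$ and, for each vertex $\mu$, a cyclic ordering $\mathfrak o$ of the edges incident with $\mu$. A loop at $\mu$ occurs twice in the cyclic ordering at $\mu$; its two occurrences are regarded as two distinct elements of $\Delta_1$ (each with its own successor). Edge $j$ is the successor of edge $i$ at $\mu$ if $j$ immediately follows $i$ in the cyclic ordering at $\mu$. The valency $\operatorname{val}(\mu)$ is the number of edges incident with $\mu$, loops counted twice; if $\operatorname{val}(\mu)=1$ the unique edge at $\mu$ is its own successor. An edge $i$ is truncated at its endpoint $\mu$ if $\operatorname{val}(\mu)=1$ and $m(\mu)=1$. Fix a field $K$. A quantized Brauer graph $(\Delta,\mathfrak o,m,q)$ is a Brauer graph with a function $q:\mathcal X_\Delta\to K\setminus\{0\}$, $(i,\mu)\mapsto q_{i,\mu}$, where $\mathcal X_\Delta$ is the set of pairs $(i,\mu)$ with $\mu$ an endpoint of $i$ and $i$ not truncated at either of its endpoints. Successor weightings. Let $G$ be a finite abelian group. For $\mu\in\Delta_0$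 let $\mathcal Z_\mu$ be the set of pairs $(i,j)$ of edges with $j$ the successor of $i$ at $\mu$, and $\mathcal Z_\Delta=\bigsqcup_{\mu\in\Delta_0}\mathcal Z_\mu$ (disjoint union). A successor weighting is a function $W:\mathcal Z_\Delta\to G$. Put $\omega_\mu=\prod_{(i,j)\in\mathcal Z_\mu}W(i,j)$, let $\operatorname{ord}(\mu)$ be the order of $\omega_\mu$ in $G$, and $H_\mu=\langle\omega_\mu\rangle$. $W$ is a Brauer weighting if $\operatorname{ord}(\mu)$ divides $m(\mu)$ for all $\mu\in\Delta_0$. For each $\mu$, $\sim$ is the equivalence relation on the set of pairs $(i,H_\mu g)$ ($i$ incident with $\mu$, $g\in G$) generated by $(i,H_\mu g)\sim(j,H_\mu gW(i,j))$ whenever $j$ is the successor of $i$ at $\mu$; the class of $(i,H_\mu g)$ is $[i,H_\mu g]$, and $\mathcal D_\mu$ is the set of classes. Brauer covering graph. The graph $\Delta_W$ has vertices $\mu_d$ ($\mu\in\Delta_0$, $d\in\mathcal D_\mu$) and edges $i_g$ ($i\in\Delta_1$, $g\in G$). If $i$ has endpoints $\mu$ and $\nu$, then $i_g$ has endpoints $\mu_{[i,H_\mu g]}$ and $\nu_{[i,H_\nu g]}$; if $i$ is a loop at $\mu$ with its two occurrences $i,\hat i$, then $i_g$ has endpoints $\mu_{[i,H_\mu g]}$ and $\mu_{[\hat i,H_\mu g]}$. The cyclic ordering $\mathfrak o_W$ is defined by: if $j$ is the successor of $i$ at $\mu$, then $j_{gW(i,j)}$ is the successor of $i_g$ at $\mu_{[i,H_\mu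 g]}$. For a Brauer weighting, $m_W(\mu_d)=m(\mu)/\operatorname{ord}(\mu)$; $(\Delta_W,\mathfrak o_W,m_W)$ is the Brauer covering graph. Given a quantizing function $q$ on $\Delta$, $q_W(i_g,\mu_d)=q_{i,\mu}$, and $(\Delta_W,\mathfrak o_W,m_W,q_W)$ is the quantized Brauer covering graph. *)

theory Defs
  imports "HOL-Algebra.Algebra"
begin

(* E : edges; V : vertices; every edge i has two occurrences (half-edges)
   (i,False) and (i,True); vx h is the vertex at which occurrence h sits
   (for a non-loop edge the two endpoints, for a loop both equal mu, the
   two occurrences being i and \<hat>i).  sc h is the successor of occurrence
   h in the cyclic ordering at vx h. *)

definition halves :: "'e set \<Rightarrow> ('e \<times> bool) set" where
  "halves E = E \<times> (UNIV :: bool set)"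

definition halves_at :: "'e set \<Rightarrow> ('e \<times> bool \<Rightarrow> 'v) \<Rightarrow> 'v \<Rightarrow> ('e \<times> bool) set" where
  "halves_at E vx \<mu> = {h \<in> halves E. vx h = \<mu>}"

definition valency :: "'e set \<Rightarrow> ('e \<times> bool \<Rightarrow> 'v) \<Rightarrow> 'v \<Rightarrow> nat" where
  "valency E vx \<mu> = card (halves_at E vx \<mu>)"

definition brauer_graph ::
  "'v set \<Rightarrow> 'e set \<Rightarrow> ('e \<times> bool \<Rightarrow> 'v) \<Rightarrow> ('e \<times> bool \<Rightarrow> 'e \<times> bool) \<Rightarrow> ('v \<Rightarrow> nat) \<Rightarrow> bool" where
  "brauer_graph V E vx sc m \<longleftrightarrow>
     finite V \<and> finite E \<and> E \<noteq> {} \<and>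
     vx ` halves E \<subseteq> V \<and>
     \<comment> \<open>connectedness\<close>
     (\<forall>\<mu>\<in>V. \<forall>\<nu>\<in>V. (\<mu>, \<nu>) \<in>
        ({(vx (i, False), vx (i, True)) | i. i \<in> E} \<union>
         {(vx (i, True), vx (i, False)) | i. i \<in> E})\<^sup>*) \<and>
     \<comment> \<open>multiplicity\<close>
     (\<forall>\<mu>\<in>V. m \<mu> \<ge> 1) \<and>
     \<comment> \<open>cyclic orderings: sc permutes occurrences, preserves vertices,
         and the occurrences at each vertex form a single cycle\<close>
     bij_betw sc (halves E) (halves E) \<and>
     (\<forall>h\<in>halves E. vx (sc h) = vx h) \<and>
     (\<forall>h\<in>halves E. \<forall>h'\<in>halves E. vx h = vx h' \<longrightarrow> (\<exists>n. (sc ^^ n) h = h'))"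

definition truncated_at ::
  "'e set \<Rightarrow> ('e \<times> bool \<Rightarrow> 'v) \<Rightarrow> ('v \<Rightarrow> nat) \<Rightarrow> 'v \<Rightarrow> bool" where
  "truncated_at E vx m \<mu> \<longleftrightarrow> valency E vx \<mu> = 1 \<and> m \<mu> = 1"

definition X_set :: "'e set \<Rightarrow> ('e \<times> bool \<Rightarrow> 'v) \<Rightarrow> ('v \<Rightarrow> nat) \<Rightarrow> ('e \<times> 'v) set" where
  "X_set E vx m = {(i, \<mu>). i \<in> E \<and> (\<mu> = vx (i, False) \<or> \<mu> = vx (i, True)) \<and>
      \<not> truncated_at E vx m (vx (i, False)) \<and> \<not> truncated_at E vx m (vx (i, True))}"

definition quantized_brauer_graph ::
  "'v set \<Rightarrow> 'e set \<Rightarrow> ('e \<times> bool \<Rightarrow> 'v) \<Rightarrow> ('e \<times> bool \<Rightarrow> 'e \<times> bool) \<Rightarrow> ('v \<Rightarrow> nat)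
   \<Rightarrow> ('e \<Rightarrow> 'v \<Rightarrow> 'k::field) \<Rightarrow> bool" where
  "quantized_brauer_graph V E vx sc m q \<longleftrightarrow>
     brauer_graph V E vx sc m \<and> (\<forall>(i, \<mu>) \<in> X_set E vx m. q i \<mu> \<noteq> 0)"

(* Successor weightings: Z_mu is in bijection with the occurrences h at mu
   via h \<mapsto> (h, sc h), so W is given as a function on occurrences. *)

definition successor_weighting ::
  "('g, 'b) monoid_scheme \<Rightarrow> 'e set \<Rightarrow> ('e \<times> bool \<Rightarrow> 'g) \<Rightarrow> bool" where
  "successor_weighting G E W \<longleftrightarrow> (\<forall>h\<in>halves E. W h \<in> carrier G)"

definition omega ::
  "('g, 'b) monoid_scheme \<Rightarrow> 'e set \<Rightarrow> ('e \<times> bool \<Rightarrow> 'v) \<Rightarrow> ('e \<times> bool \<Rightarrow> 'g) \<Rightarrow> 'v \<Rightarrow> 'g" where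
  "omega G E vx W \<mu> = finprod G W (halves_at E vx \<mu>)"

definition Hsub ::
  "('g, 'b) monoid_scheme \<Rightarrow> 'e set \<Rightarrow> ('e \<times> bool \<Rightarrow> 'v) \<Rightarrow> ('e \<times> bool \<Rightarrow> 'g) \<Rightarrow> 'v \<Rightarrow> 'g set" where
  "Hsub G E vx W \<mu> = generate G {omega G E vx W \<mu>}"

definition brauer_weighting ::
  "('g, 'b) monoid_scheme \<Rightarrow> 'v set \<Rightarrow> 'e set \<Rightarrow> ('e \<times> bool \<Rightarrow> 'v) \<Rightarrow> ('v \<Rightarrow> nat)
   \<Rightarrow> ('e \<times> bool \<Rightarrow> 'g) \<Rightarrow> bool" where
  "brauer_weighting G V E vx m W \<longleftrightarrow>
     successor_weighting G E W \<and>
     (\<forall>\<mu>\<in>V. group.ord G (omega G E vx W \<mu>) dvd m \<mu>)"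

definition sim_step ::
  "('g, 'b) monoid_scheme \<Rightarrow> 'e set \<Rightarrow> ('e \<times> bool \<Rightarrow> 'v) \<Rightarrow> ('e \<times> bool \<Rightarrow> 'e \<times> bool)
   \<Rightarrow> ('e \<times> bool \<Rightarrow> 'g) \<Rightarrow> 'v \<Rightarrow> ((('e \<times> bool) \<times> 'g set) \<times> (('e \<times> bool) \<times> 'g set)) set" where
  "sim_step G E vx sc W \<mu> =
     {((h, Hsub G E vx W \<mu> #>\<^bsub>G\<^esub> g),
       (sc h, Hsub G E vx W \<mu> #>\<^bsub>G\<^esub> (g \<otimes>\<^bsub>G\<^esub> W h))) | h g.
        h \<in> halves_at E vx \<mu> \<and> g \<in> carrier G}"

definition sim_rel ::
  "('g, 'b) monoid_scheme \<Rightarrow> 'e set \<Rightarrow> ('e \<times> bool \<Rightarrow> 'v) \<Rightarrow> ('e \<times> bool \<Rightarrow> 'e \<times> bool)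
   \<Rightarrow> ('e \<times> bool \<Rightarrow> 'g) \<Rightarrow> 'v \<Rightarrow> ((('e \<times> bool) \<times> 'g set) \<times> (('e \<times> bool) \<times> 'g set)) set" where
  "sim_rel G E vx sc W \<mu> = (sim_step G E vx sc W \<mu> \<union> (sim_step G E vx sc W \<mu>)\<inverse>)\<^sup>*"

definition sim_class ::
  "('g, 'b) monoid_scheme \<Rightarrow> 'e set \<Rightarrow> ('e \<times> bool \<Rightarrow> 'v) \<Rightarrow> ('e \<times> bool \<Rightarrow> 'e \<times> bool)
   \<Rightarrow> ('e \<times> bool \<Rightarrow> 'g) \<Rightarrow> 'v \<Rightarrow> 'e \<times> bool \<Rightarrow> 'g \<Rightarrow> (('e \<times> bool) \<times> 'g set) set" where
  "sim_class G E vx sc W \<mu> h g =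
     sim_rel G E vx sc W \<mu> `` {(h, Hsub G E vx W \<mu> #>\<^bsub>G\<^esub> g)}"

definition D_set ::
  "('g, 'b) monoid_scheme \<Rightarrow> 'e set \<Rightarrow> ('e \<times> bool \<Rightarrow> 'v) \<Rightarrow> ('e \<times> bool \<Rightarrow> 'e \<times> bool)
   \<Rightarrow> ('e \<times> bool \<Rightarrow> 'g) \<Rightarrow> 'v \<Rightarrow> (('e \<times> bool) \<times> 'g set) set set" where
  "D_set G E vx sc W \<mu> =
     {sim_class G E vx sc W \<mu> h g | h g. h \<in> halves_at E vx \<mu> \<and> g \<in> carrier G}"

definition cov_vertices ::
  "('g, 'b) monoid_scheme \<Rightarrow> 'v set \<Rightarrow> 'e set \<Rightarrow> ('e \<times> bool \<Rightarrow> 'v) \<Rightarrow> ('e \<times> bool \<Rightarrow> 'e \<times> bool)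
   \<Rightarrow> ('e \<times> bool \<Rightarrow> 'g) \<Rightarrow> ('v \<times> (('e \<times> bool) \<times> 'g set) set) set" where
  "cov_vertices G V E vx sc W = {(\<mu>, d). \<mu> \<in> V \<and> d \<in> D_set G E vx sc W \<mu>}"

definition cov_edges :: "('g, 'b) monoid_scheme \<Rightarrow> 'e set \<Rightarrow> ('e \<times> 'g) set" where
  "cov_edges G E = E \<times> carrier G"

definition cov_end ::
  "('g, 'b) monoid_scheme \<Rightarrow> 'e set \<Rightarrow> ('e \<times> bool \<Rightarrow> 'v) \<Rightarrow> ('e \<times> bool \<Rightarrow> 'e \<times> bool)
   \<Rightarrow> ('e \<times> bool \<Rightarrow> 'g) \<Rightarrow> 'e \<times> 'g \<Rightarrow> bool \<Rightarrow> 'v \<times> (('e \<times> bool) \<times> 'g set) set" where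
  "cov_end G E vx sc W ig b =
     (vx (fst ig, b), sim_class G E vx sc W (vx (fst ig, b)) (fst ig, b) (snd ig))"

definition cov_loopless ::
  "('g, 'b) monoid_scheme \<Rightarrow> 'e set \<Rightarrow> ('e \<times> bool \<Rightarrow> 'v) \<Rightarrow> ('e \<times> bool \<Rightarrow> 'e \<times> bool)
   \<Rightarrow> ('e \<times> bool \<Rightarrow> 'g) \<Rightarrow> bool" where
  "cov_loopless G E vx sc W \<longleftrightarrow>
     (\<forall>ig\<in>cov_edges G E. cov_end G E vx sc W ig False \<noteq> cov_end G E vx sc W ig True)"

end

theory Submission
  imports Defs
begin

definition Z2 :: "nat monoid" where
  "Z2 = \<lparr>carrier = {0,1}, monoid.mult = (\<lambda>x y. (x + y) mod 2), one = 0\<rparr>"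

lemma Z2_simps [simp]: "carrier Z2 = {0,1}" "monoid.mult Z2 = (\<lambda>x y. (x + y) mod 2)" "one Z2 = 0"
  by (simp_all add: Z2_def)

lemma Z2_comm_group: "comm_group Z2"
  by (rule comm_groupI) (auto simp: mod_add_eq)

lemma Z2_group: "group Z2"
  using Z2_comm_group comm_group.axioms(2) by blast

lemma Z2_generate_one: "x \<in> generate Z2 {0} \<Longrightarrow> x = 0"
proof (induction rule: generate.induct)
  case (inv h)
  then show ?case using monoid.inv_one[OF group.is_monoid[OF Z2_group]] by simp
qed auto

lemma Z2_Hsub: "omega Z2 E vx W \<mu> = 0 \<Longrightarrow> Hsub Z2 E vx W \<mu> = {0}"
  unfolding Hsub_def using Z2_generate_one generate.one[of Z2 "{0}"] by auto

lemma Z2_coset: "{0} #>\<^bsub>Z2\<^esub> g = {g mod 2}"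
  by (simp add: r_coset_def)

definition fZ :: "'e \<times> bool \<Rightarrow> nat" where "fZ h = (if snd h then 1 else 0)"

definition WZ :: "('e \<times> bool \<Rightarrow> 'e \<times> bool) \<Rightarrow> 'e \<times> bool \<Rightarrow> nat" where
  "WZ sc h = (fZ (sc h) + fZ h) mod 2"

lemma WZ_carrier: "WZ sc h \<in> carrier Z2"
  by (auto simp: WZ_def fZ_def)

lemma omega_zero:
  assumes bg: "brauer_graph V E vx sc m"
  shows "omega Z2 E vx (WZ sc) \<mu> = 0"
proof -
  let ?A = "halves_at E vx \<mu>"
  have cm: "comm_monoid Z2" using Z2_comm_group comm_group.axioms(1) by blast
  have fin: "finite (halves E)" using bg by (simp add: brauer_graph_def halves_def)
  have bij: "bij_betw sc (halves E) (halves E)" and pres: "\<forall>h\<in>halves E. vx (sc h) = vx h"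
    using bg by (auto simp: brauer_graph_def)
  have sub: "?A \<subseteq> halves E" by (auto simp: halves_at_def)
  have inj: "inj_on sc ?A" using bij sub unfolding bij_betw_def by (blast intro: inj_on_subset)
  have img: "sc ` ?A = ?A"
  proof
    show "sc ` ?A \<subseteq> ?A" using bij pres unfolding halves_at_def bij_betw_def by auto
    show "?A \<subseteq> sc ` ?A"
    proof
      fix h assume h: "h \<in> ?A"
      then have "h \<in> sc ` halves E" using bij unfolding bij_betw_def halves_at_def by auto
      then obtain h' where "h' \<in> halves E" "h = sc h'" by auto
      then show "h \<in> sc ` ?A" using h pres unfolding halves_at_def by auto
    qed
  qed
  have fc: "fZ \<in> Pi (sc ` ?A) (\<lambda>_. carrier Z2)" by (auto simp: fZ_def)
  have "omega Z2 E vx (WZ sc) \<mu> = finprod Z2 (\<lambda>h. fZ (sc h) \<otimes>\<^bsub>Z2\<^esub> fZ h) ?A"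
    unfolding omega_def WZ_def by simp
  also have "\<dots> = finprod Z2 (\<lambda>h. fZ (sc h)) ?A \<otimes>\<^bsub>Z2\<^esub> finprod Z2 fZ ?A"
    by (rule comm_monoid.finprod_multf[OF cm]) (auto simp: fZ_def)
  also have "finprod Z2 (\<lambda>h. fZ (sc h)) ?A = finprod Z2 fZ ?A"
    using comm_monoid.finprod_reindex[OF cm fc inj] img by simp
  finally have "omega Z2 E vx (WZ sc) \<mu> = (finprod Z2 fZ ?A + finprod Z2 fZ ?A) mod 2"
    by simp
  then show ?thesis by presburger
qed

lemma invariant:
  assumes om: "omega Z2 E vx (WZ sc) \<mu> = 0"
    and r: "(x, y) \<in> sim_rel Z2 E vx sc (WZ sc) \<mu>"
  shows "(\<lambda>z. (z + fZ (fst x)) mod 2) ` snd x = (\<lambda>z. (z + fZ (fst y)) mod 2) ` snd y"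
proof -
  have st: "(\<lambda>z. (z + fZ (fst a)) mod 2) ` snd a = (\<lambda>z. (z + fZ (fst b)) mod 2) ` snd b"
    if "(a, b) \<in> sim_step Z2 E vx sc (WZ sc) \<mu>" for a b
    using that unfolding sim_step_def Z2_Hsub[OF om]
    by (auto simp: Z2_coset WZ_def fZ_def mod_add_eq split: if_splits)
  show ?thesis using r unfolding sim_rel_def
  proof (induction rule: rtrancl_induct)
    case (step y z)
    have "(\<lambda>w. (w + fZ (fst y)) mod 2) ` snd y = (\<lambda>w. (w + fZ (fst z)) mod 2) ` snd z"
      using step.hyps(2)
    proof
      assume "(y, z) \<in> sim_step Z2 E vx sc (WZ sc) \<mu>"
      then show ?thesis by (rule st)
    next
      assume "(y, z) \<in> (sim_step Z2 E vx sc (WZ sc) \<mu>)\<inverse>"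
      then show ?thesis by (rule sym[OF st[OF converseD]])
    qed
    then show ?case by (rule trans[OF step.IH])
  qed simp
qed

theorem proposition6p5:
  fixes V :: "'v set" and E :: "'e set"
    and vx :: "'e \<times> bool \<Rightarrow> 'v" and sc :: "'e \<times> bool \<Rightarrow> 'e \<times> bool"
    and m :: "'v \<Rightarrow> nat" and q :: "'e \<Rightarrow> 'v \<Rightarrow> 'k::field"
  assumes "quantized_brauer_graph V E vx sc m q"
  shows "\<exists>(G :: nat monoid) (W :: 'e \<times> bool \<Rightarrow> nat).
           comm_group G \<and> finite (carrier G) \<and>
           brauer_weighting G V E vx m W \<and>
           cov_loopless G E vx sc W"
proof -
  have bg: "brauer_graph V E vx sc m" using assms by (simp add: quantized_brauer_graph_def)
  have om: "\<And>\<mu>. omega Z2 E vx (WZ sc) \<mu> = 0" using omega_zero[OF bg] by blast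
  have bw: "brauer_weighting Z2 V E vx m (WZ sc)"
  proof -
    have c: "\<forall>h\<in>halves E. WZ sc h \<in> carrier Z2" using WZ_carrier by blast
    show ?thesis unfolding brauer_weighting_def successor_weighting_def
      using c om group.ord_id[OF Z2_group, simplified] by simp
  qed
  have ll: "cov_loopless Z2 E vx sc (WZ sc)"
    unfolding cov_loopless_def
  proof
    fix ig assume ig: "ig \<in> cov_edges Z2 E"
    obtain i g where igd: "ig = (i, g)" by force
    have g: "g \<in> {0, 1}" using ig igd by (simp add: cov_edges_def)
    show "cov_end Z2 E vx sc (WZ sc) ig False \<noteq> cov_end Z2 E vx sc (WZ sc) ig True"
    proof
      assume eq: "cov_end Z2 E vx sc (WZ sc) ig False = cov_end Z2 E vx sc (WZ sc) ig True"
      let ?\<mu> = "vx (i, True)"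
      have "vx (i, False) = ?\<mu>" using eq igd by (simp add: cov_end_def)
      then have cl: "sim_class Z2 E vx sc (WZ sc) ?\<mu> (i, False) g = sim_class Z2 E vx sc (WZ sc) ?\<mu> (i, True) g"
        using eq igd by (simp add: cov_end_def)
      have "((i, True), {g}) \<in> sim_class Z2 E vx sc (WZ sc) ?\<mu> (i, True) g"
        using g by (auto simp: sim_class_def sim_rel_def Z2_Hsub[OF om] Z2_coset)
      then have "(((i, False), {g}), ((i, True), {g})) \<in> sim_rel Z2 E vx sc (WZ sc) ?\<mu>"
        using g cl by (auto simp: sim_class_def Z2_Hsub[OF om] Z2_coset)
      from invariant[OF om this] g show False by (auto simp: fZ_def)
    qed
  qed
  show ?thesis
    by (rule exI[of _ Z2], rule exI[of _ "WZ sc"]) (simp add: Z2_comm_group bw ll)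
qed

end
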